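(* For every integer $N\ge1$, $$\phi_N(y,z)=\{(q-1)z\}^{-N(N-1)/2}q^{-(N-2)(N-1)N/6}\det\Big(p_{2(N-i)+1}\big(y,q^{N-j}z\big)\Big)_{i,j=1}^{N},$$ i.e. the determinant has first row $p_{2N-1}(y,q^{N-1}z),p_{2N-1}(y,q^{N-2}z),\dots,p_{2N-1}(y,z)$ and last row $p_1(y,q^{N-1}z),\dots,p_1(y,z)$.
   Context: $q$ is a fixed nonzero complex constant that is not a root of unity; $y,z$ are variables. For $k\in\mathbb{Z}$ the polynomials $p_k(y,z)$ are defined by the generating function $\sum_{n\ge 0}p_n(y,z)t^n=\frac{(-(1-q)t;q)_\infty}{((1-q)yt;q)_\infty((1-q)zt;q)_\infty}$, with $(a;q)_\infty=\prod_{i\ge0}(1-aq^i)$, and $p_k=0$ for $k<0$; equivalently $p_n(y,z)=(1-q)^n\sum_{a+b+c=n}\frac{y^a z^b q^{c(c-1)/2}}{(q;q)_a(q;q)_b(q;q)_c}$ with $(q;q)_m=\prod_{j=1}^m(1-q^j)$. For $N>0$, $\phi_N(y,z)=\det\big(p_{N-2i+j+1}(y,z)\big)_{i,j=1}^N$. *)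

theory Defs
  imports Complex_Main "Jordan_Normal_Form.Determinant"
begin

definition qpoch :: "complex \<Rightarrow> nat \<Rightarrow> complex" where
  "qpoch q m = (\<Prod>j=1..m. 1 - q ^ j)"

definition pp :: "complex \<Rightarrow> int \<Rightarrow> complex \<Rightarrow> complex \<Rightarrow> complex" where
  "pp q k y z = (if k < 0 then 0 else
     (let n = nat k in
      (1 - q) ^ n *
      (\<Sum>(a, b, c) \<in> {(a, b, c). a + b + c = n}.
          y ^ a * z ^ b * q ^ (c * (c - 1) div 2) / (qpoch q a * qpoch q b * qpoch q c))))"

text \<open>phi_N(y,z) = det (p_{N-2i+j+1}(y,z))_{i,j=1..N}; here with 0-based indices
  i' = i-1, j' = j-1 the entry is p_{N-2i'+j'}.\<close>
definition phi :: "complex \<Rightarrow> nat \<Rightarrow> complex \<Rightarrow> complex \<Rightarrow> complex" where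
  "phi q N y z = det (mat N N (\<lambda>(i, j). pp q (int N - 2 * int i + int j) y z))"

end

theory Submission
  imports Defs
begin



definition hh :: "complex \<Rightarrow> nat \<Rightarrow> complex \<Rightarrow> complex" where
  "hh q m w = (\<Sum>b\<le>m. w ^ b * q ^ ((m-b) * ((m-b) - 1) div 2) / (qpoch q b * qpoch q (m-b)))"

definition SS :: "complex \<Rightarrow> nat \<Rightarrow> complex \<Rightarrow> complex \<Rightarrow> complex" where
  "SS q n y w = (\<Sum>a\<le>n. y ^ a / qpoch q a * hh q (n-a) w)"

lemma qpoch_Suc: "qpoch q (Suc b) = qpoch q b * (1 - q ^ Suc b)"
  unfolding qpoch_def by (simp add: prod.nat_ivl_Suc' mult.commute)

lemma qpoch_nz: assumes "\<forall>n::nat. n > 0 \<longrightarrow> q ^ n \<noteq> 1" shows "qpoch q b \<noteq> 0"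
  using assms by (induction b) (auto simp: qpoch_Suc qpoch_def)

lemma hh0: "hh q 0 w = 1"
  by (simp add: hh_def qpoch_def)

lemma hh_Suc: assumes "\<forall>n::nat. n > 0 \<longrightarrow> q ^ n \<noteq> 1"
  shows "hh q (Suc m) w - hh q (Suc m) (q*w) = w * hh q m w"
proof -
  have "hh q (Suc m) w - hh q (Suc m) (q*w) =
     (\<Sum>b\<le>Suc m. w ^ b * (1 - q^b) * q ^ ((Suc m-b) * ((Suc m-b) - 1) div 2) / (qpoch q b * qpoch q (Suc m-b)))"
    unfolding hh_def sum_subtractf[symmetric]
    by (rule sum.cong) (auto simp: power_mult_distrib diff_divide_distrib algebra_simps)
  also have "\<dots> = (\<Sum>b\<le>m. w ^ Suc b * (1 - q^Suc b) * q ^ ((m-b) * ((m-b) - 1) div 2) / (qpoch q (Suc b) * qpoch q (m-b)))"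
    by (subst sum.atMost_Suc_shift) simp
  also have "\<dots> = (\<Sum>b\<le>m. w * (w ^ b * q ^ ((m-b) * ((m-b) - 1) div 2) / (qpoch q b * qpoch q (m-b))))"
  proof (rule sum.cong)
    fix b assume "b \<in> {..m}"
    have "1 - q ^ Suc b \<noteq> 0" using assms by (metis right_minus_eq zero_less_Suc)
    then show "w ^ Suc b * (1 - q^Suc b) * q ^ ((m-b) * ((m-b) - 1) div 2) / (qpoch q (Suc b) * qpoch q (m-b)) =
      w * (w ^ b * q ^ ((m-b) * ((m-b) - 1) div 2) / (qpoch q b * qpoch q (m-b)))"
      by (simp add: qpoch_Suc)
  qed simp
  finally show ?thesis by (simp add: hh_def sum_distrib_left)
qed

lemma SS0: "SS q 0 y w = 1"
  by (simp add: SS_def hh0 qpoch_def)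

lemma SS_Suc: assumes "\<forall>n::nat. n > 0 \<longrightarrow> q ^ n \<noteq> 1"
  shows "SS q (Suc n) y w - SS q (Suc n) y (q*w) = w * SS q n y w"
proof -
  have "SS q (Suc n) y w - SS q (Suc n) y (q*w) =
    (\<Sum>a\<le>Suc n. y ^ a / qpoch q a * (hh q (Suc n-a) w - hh q (Suc n-a) (q*w)))"
    unfolding SS_def sum_subtractf[symmetric] by (simp add: algebra_simps)
  also have "\<dots> = (\<Sum>a\<le>n. y ^ a / qpoch q a * (w * hh q (n-a) w))"
    by (simp add: hh0 Suc_diff_le hh_Suc[OF assms])
  finally show ?thesis by (simp add: SS_def sum_distrib_left algebra_simps)
qed

lemma pp_SS: "pp q (int n) y z = (1-q)^n * SS q n y z"
proof -
  let ?f = "\<lambda>(a,b,c). y ^ a * z ^ b * q ^ (c * (c - 1) div 2) / (qpoch q a * qpoch q b * qpoch q c)"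
  have eq: "{(a, b, c). a + b + c = n} = (\<lambda>(a,b). (a,b,n-a-b)) ` (SIGMA a:{..n}. {..n-a})"
    by (auto simp: image_iff)
  have inj: "inj_on (\<lambda>(a,b). (a,b,n-a-b)) (SIGMA a:{..n}. {..n-a})"
    by (auto simp: inj_on_def)
  have "(\<Sum>x\<in>{(a, b, c). a + b + c = n}. ?f x) = (\<Sum>x\<in>(SIGMA a:{..n}. {..n-a}). ?f ((\<lambda>(a,b). (a,b,n-a-b)) x))"
    unfolding eq by (rule sum.reindex[OF inj, unfolded comp_def])
  also have "\<dots> = (\<Sum>a\<le>n. \<Sum>b\<le>n-a. ?f (a,b,n-a-b))"
    by (subst sum.Sigma) (auto simp: case_prod_beta)
  also have "\<dots> = SS q n y z"
    unfolding SS_def hh_def sum_distrib_left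
    by (intro sum.cong refl) (simp add: divide_inverse mult_ac diff_diff_add)
  finally show ?thesis unfolding pp_def by simp
qed

lemma pp_shift: assumes "\<forall>n::nat. n > 0 \<longrightarrow> q ^ n \<noteq> 1"
  shows "pp q k y (q*w) = pp q k y w + (q-1)*w*pp q (k-1) y w"
proof (cases "k < 0")
  case True then show ?thesis by (simp add: pp_def)
next
  case False
  then obtain n where k: "k = int n" by (metis nonneg_int_cases not_less)
  show ?thesis
  proof (cases n)
    case 0 then show ?thesis using k by (simp add: pp_SS SS0 pp_def)
  next
    case (Suc m)
    have km: "k - 1 = int m" using k Suc by simp
    have "SS q n y (q*w) = SS q n y w - w * SS q m y w"
      using SS_Suc[OF assms, of m y w] Suc by (simp add: algebra_simps)
    moreover have "pp q k y (q*w) = (1-q)^n * SS q n y (q*w)" "pp q k y w = (1-q)^n * SS q n y w"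
      "pp q (k-1) y w = (1-q)^m * SS q m y w" using k km pp_SS by simp_all
    moreover have "(1-q)^n = (1-q)*(1-q)^m" using Suc by simp
    ultimately show ?thesis by (simp only:) (simp add: algebra_simps)
  qed
qed




definition BB :: "complex \<Rightarrow> complex \<Rightarrow> complex \<Rightarrow> nat \<Rightarrow> (nat \<Rightarrow> int) \<Rightarrow> nat \<Rightarrow> complex mat" where
  "BB q y z N nn m = mat N N (\<lambda>(i,j). if N \<le> j + m then pp q (nn i - int (N-1-j)) y z
       else pp q (nn i - int m) y (q^(N-1-j-m) * z))"

definition EE :: "nat \<Rightarrow> nat \<Rightarrow> complex mat" where
  "EE N m = mat N N (\<lambda>(l,j). (if l = j then 1 else 0) - (if l = Suc j \<and> j+m+1 < N then 1 else 0))"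

definition dd :: "complex \<Rightarrow> complex \<Rightarrow> nat \<Rightarrow> nat \<Rightarrow> nat \<Rightarrow> complex" where
  "dd q z N m j = (if j + m + 1 < N then (q-1)*z*q^(N-2-j-m) else 1)"

definition DD :: "complex \<Rightarrow> complex \<Rightarrow> nat \<Rightarrow> nat \<Rightarrow> complex mat" where
  "DD q z N m = mat N N (\<lambda>(l,j). if l = j then dd q z N m j else 0)"

lemma det_EE: "det (EE N m) = 1"
proof -
  have "det (EE N m) = prod_list (diag_mat (EE N m))"
    by (rule det_lower_triangular[of N]) (auto simp: EE_def)
  also have "\<dots> = (\<Prod>j<N. EE N m $$ (j,j))" unfolding diag_mat_def
    by (simp add: prod.distinct_set_conv_list[symmetric] atLeast0LessThan EE_def)
  also have "\<dots> = 1" by (simp add: EE_def)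
  finally show ?thesis .
qed

lemma det_DD: "det (DD q z N m) = (\<Prod>j<N. dd q z N m j)"
proof -
  have "det (DD q z N m) = prod_list (diag_mat (DD q z N m))"
    by (rule det_upper_triangular[of _ N]) (auto simp: DD_def upper_triangular_def)
  also have "\<dots> = (\<Prod>j<N. dd q z N m j)" unfolding diag_mat_def DD_def
    by (simp add: prod.distinct_set_conv_list[symmetric] atLeast0LessThan)
  finally show ?thesis .
qed



lemma mif: "(x::complex) * (if P then a else 0) = (if P then x*a else 0)" by simp
lemma dims[simp]: "dim_row (BB q y z N nn m) = N" "dim_col (BB q y z N nn m) = N"
  "dim_row (EE N m) = N" "dim_col (EE N m) = N" "dim_row (DD q z N m) = N" "dim_col (DD q z N m) = N"
  by (auto simp: BB_def EE_def DD_def)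
lemma step_mat: assumes "\<forall>n::nat. n > 0 \<longrightarrow> q ^ n \<noteq> 1"
  shows "BB q y z N nn m * EE N m = BB q y z N nn (Suc m) * DD q z N m"
proof (rule eq_matI)
  fix i j assume i: "i < dim_row (BB q y z N nn (Suc m) * DD q z N m)"
    and j: "j < dim_col (BB q y z N nn (Suc m) * DD q z N m)"
  then have i: "i < N" and j: "j < N" by (auto simp: BB_def DD_def)
  let ?B = "\<lambda>m l. BB q y z N nn m $$ (i,l)"
  have L: "(BB q y z N nn m * EE N m) $$ (i,j) = ?B m j - (if j+m+1 < N then ?B m (Suc j) else 0)"
  proof -
    have "(BB q y z N nn m * EE N m) $$ (i,j) = (\<Sum>l\<in>{0..<N}. ?B m l * ((if l = j then 1 else 0) - (if l = Suc j \<and> j+m+1 < N then 1 else 0)))"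
      using i j by (auto simp: scalar_prod_def EE_def intro!: sum.cong)
    also have "\<dots> = (\<Sum>l\<in>{0..<N}. (if l = j then ?B m l else 0)) - (\<Sum>l\<in>{0..<N}. (if l = Suc j \<and> j+m+1 < N then ?B m l else 0))"
      unfolding sum_subtractf[symmetric] by (intro sum.cong refl) (simp add: right_diff_distrib)
    also have "\<dots> = ?B m j - (if j+m+1 < N then ?B m (Suc j) else 0)"
      using j by (simp add: sum.delta')
    finally show ?thesis .
  qed
  have R: "(BB q y z N nn (Suc m) * DD q z N m) $$ (i,j) = ?B (Suc m) j * dd q z N m j"
  proof -
    have "(BB q y z N nn (Suc m) * DD q z N m) $$ (i,j) = (\<Sum>l\<in>{0..<N}. ?B (Suc m) l * (if l = j then dd q z N m j else 0))"
      using i j by (auto simp: scalar_prod_def DD_def intro!: sum.cong)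
    also have "\<dots> = ?B (Suc m) j * dd q z N m j" using j by (simp add: mif sum.delta')
    finally show ?thesis .
  qed
  show "(BB q y z N nn m * EE N m) $$ (i,j) = (BB q y z N nn (Suc m) * DD q z N m) $$ (i,j)"
  proof (cases "j + m + 1 < N")
    case True
    define w where "w = q^(N-2-j-m) * z"
    have e1: "q^(N-1-j-m) * z = q * w" unfolding w_def using True
      by (simp add: power_Suc[symmetric] Suc_diff_Suc del: power_Suc)
    have "?B m j = pp q (nn i - int m) y (q*w)" using i j True e1 by (simp add: BB_def)
    moreover have "?B m (Suc j) = pp q (nn i - int m) y w" using i j True by (simp add: BB_def w_def)
    moreover have "?B (Suc m) j = pp q (nn i - int m - 1) y w" using i j True
      by (simp add: BB_def w_def algebra_simps)
    ultimately show ?thesis using True pp_shift[OF assms, of "nn i - int m" y w]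
      by (simp add: L R dd_def w_def algebra_simps)
  next
    case False
    have "?B m j = ?B (Suc m) j"
    proof (cases "N \<le> j+m")
      case True then show ?thesis using i j by (simp add: BB_def)
    next
      case F2: False
      then have "N = Suc (j+m)" using False by simp
      then show ?thesis using i j by (simp add: BB_def)
    qed
    then show ?thesis using False by (simp add: L R dd_def)
  qed
qed (auto simp: BB_def EE_def DD_def)




lemma carrier_BB: "BB q y z N nn m \<in> carrier_mat N N" unfolding carrier_mat_def by (simp only: mem_Collect_eq dims simp_thms)
lemma carrier_EE: "EE N m \<in> carrier_mat N N" unfolding carrier_mat_def by (simp only: mem_Collect_eq dims simp_thms)
lemma carrier_DD: "DD q z N m \<in> carrier_mat N N" unfolding carrier_mat_def by (simp only: mem_Collect_eq dims simp_thms)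

lemma det_step: assumes "\<forall>n::nat. n > 0 \<longrightarrow> q ^ n \<noteq> 1"
  shows "det (BB q y z N nn m) = det (BB q y z N nn (Suc m)) * (\<Prod>j<N. dd q z N m j)"
proof -
  have "det (BB q y z N nn m * EE N m) = det (BB q y z N nn m) * det (EE N m)"
    by (rule det_mult[OF carrier_BB carrier_EE])
  then have "det (BB q y z N nn m) = det (BB q y z N nn m * EE N m)" by (simp only: det_EE mult_1_right)
  also have "\<dots> = det (BB q y z N nn (Suc m) * DD q z N m)" by (simp only: step_mat[OF assms])
  also have "\<dots> = det (BB q y z N nn (Suc m)) * det (DD q z N m)"
    by (rule det_mult[OF carrier_BB carrier_DD])
  finally show ?thesis by (simp only: det_DD)
qed

lemma det_iter: assumes "\<forall>n::nat. n > 0 \<longrightarrow> q ^ n \<noteq> 1"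
  shows "det (BB q y z N nn 0) = det (BB q y z N nn k) * (\<Prod>m<k. \<Prod>j<N. dd q z N m j)"
proof (induction k)
  case (Suc k)
  then show ?case unfolding prod.lessThan_Suc det_step[OF assms, of y z N nn k] by (simp only: mult_ac)
qed simp

lemma geo: "(\<Prod>j<r. (c::complex) ^ (r - 1 - j)) = c ^ (\<Sum>j<r. j)"
proof -
  have "(\<Prod>j<r. c ^ (r - 1 - j)) = (\<Prod>j<r. c ^ (r - Suc j))" by simp
  also have "\<dots> = (\<Prod>j<r. c ^ j)" by (rule prod.nat_diff_reindex)
  also have "\<dots> = c ^ (\<Sum>j<r. j)" by (simp add: power_sum)
  finally show ?thesis .
qed

lemma prod_dd: "(\<Prod>j<N. dd q z N m j) = ((q-1)*z) ^ (N - Suc m) * q ^ (\<Sum>j<N - Suc m. j)"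
proof -
  let ?r = "N - Suc m"
  have "(\<Prod>j<N. dd q z N m j) = (\<Prod>j<?r. dd q z N m j)"
    by (rule prod.mono_neutral_right) (auto simp: dd_def)
  also have "\<dots> = (\<Prod>j<?r. ((q-1)*z) * q ^ (?r - 1 - j))"
    by (rule prod.cong) (auto simp: dd_def add_ac)
  also have "\<dots> = ((q-1)*z) ^ ?r * q ^ (\<Sum>j<?r. j)"
    by (simp only: prod.distrib prod_constant card_lessThan geo power_mult_distrib)
  finally show ?thesis .
qed

lemma prod_all: "(\<Prod>m<N. \<Prod>j<N. dd q z N m j) = ((q-1)*z) ^ (\<Sum>r<N. r) * q ^ (\<Sum>r<N. \<Sum>j<r. j)"
proof -
  have "(\<Prod>m<N. \<Prod>j<N. dd q z N m j) = (\<Prod>m<N. ((q-1)*z) ^ (N - Suc m) * q ^ (\<Sum>j<N - Suc m. j))"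
    by (simp add: prod_dd)
  also have "\<dots> = (\<Prod>r<N. ((q-1)*z) ^ r * q ^ (\<Sum>j<r. j))"
    by (rule prod.nat_diff_reindex[where g = "\<lambda>r. ((q-1)*z) ^ r * q ^ (\<Sum>j<r. j)"])
  also have "\<dots> = ((q-1)*z) ^ (\<Sum>r<N. r) * q ^ (\<Sum>r<N. \<Sum>j<r. j)"
    by (simp add: prod.distrib power_sum)
  finally show ?thesis .
qed

lemma sum1: "2 * int (\<Sum>j<n. j) = int n * (int n - 1)"
  by (induction n) (auto simp: algebra_simps)

lemma sum2: "6 * int (\<Sum>r<n. \<Sum>j<r. j) = (int n - 2) * (int n - 1) * int n"
proof (induction n)
  case (Suc n)
  have "6 * int (\<Sum>r<Suc n. \<Sum>j<r. j) = 6 * int (\<Sum>r<n. \<Sum>j<r. j) + 3 * (2 * int (\<Sum>j<n. j))"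
    by simp
  also have "\<dots> = (int n - 2) * (int n - 1) * int n + 3 * (int n * (int n - 1))"
    using Suc sum1 by simp
  finally show ?case by (simp add: algebra_simps)
qed simp




theorem lemma4:
  fixes q :: complex and N :: nat and y z :: complex
  assumes "q \<noteq> 0" and "\<forall>n::nat. n > 0 \<longrightarrow> q ^ n \<noteq> 1"
    and "N \<ge> 1" and "z \<noteq> 0"
  shows "phi q N y z =
    ((q - 1) * z) powi (- (int N * (int N - 1) div 2)) *
    q powi (- ((int N - 2) * (int N - 1) * int N div 6)) *
    det (mat N N (\<lambda>(i, j). pp q (2 * (int N - int i - 1) + 1) y (q ^ (N - j - 1) * z)))"
proof -
  define nn where "nn = (\<lambda>i::nat. 2 * (int N - int i - 1) + 1)"
  define X where "X = (q - 1) * z"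
  define a where "a = (\<Sum>r<N. r)"
  define b where "b = (\<Sum>r<N. \<Sum>j<r. j)"
  have q1: "q \<noteq> 1" using assms(2)[rule_format, of 1] by simp
  have X0: "X \<noteq> 0" using q1 assms(4) by (simp add: X_def)
  have M0: "mat N N (\<lambda>(i, j). pp q (2 * (int N - int i - 1) + 1) y (q ^ (N - j - 1) * z)) = BB q y z N nn 0"
    by (rule eq_matI) (simp_all add: BB_def nn_def)
  have MN: "BB q y z N nn N = mat N N (\<lambda>(i, j). pp q (int N - 2 * int i + int j) y z)"
    proof (rule eq_matI)
    fix i j assume "i < dim_row (mat N N (\<lambda>(i, j). pp q (int N - 2 * int i + int j) y z))"
      "j < dim_col (mat N N (\<lambda>(i, j). pp q (int N - 2 * int i + int j) y z))"
    then have i: "i < N" and j: "j < N" by simp_all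
    have e: "nn i - int (N - 1 - j) = int N - 2 * int i + int j" using j unfolding nn_def by (simp add: of_nat_diff)
    have "BB q y z N nn N $$ (i, j) = pp q (nn i - int (N - 1 - j)) y z" using i j by (simp add: BB_def)
    then show "BB q y z N nn N $$ (i, j) = mat N N (\<lambda>(i, j). pp q (int N - 2 * int i + int j) y z) $$ (i, j)"
      using i j by (simp only: e index_mat case_prod_conv)
  qed (simp_all add: BB_def)
  have detM: "det (BB q y z N nn 0) = phi q N y z * (X ^ a * q ^ b)"
    unfolding det_iter[OF assms(2), of y z N nn N] prod_all MN phi_def X_def a_def b_def ..
  have ea: "int N * (int N - 1) div 2 = int a"
    using sum1[of N] unfolding a_def by simp
  have eb: "(int N - 2) * (int N - 1) * int N div 6 = int b"
    using sum2[of N] unfolding b_def by simp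
  show ?thesis
    unfolding M0 detM ea eb X_def[symmetric] power_int_minus power_int_of_nat
    using X0 assms(1) by (simp add: field_simps)
qed


end
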